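(* Let $M$ (dimension $m$) and $N$ (dimension $n$) be smooth manifolds carrying torsion-free (symmetric) affine connections ${}^M\nabla$ and ${}^N\nabla$, with local components ${}^M\Gamma^k_{ij}(x)$ and ${}^N\Gamma^\sigma_{\alpha\lambda}(\phi)$ in local coordinates $(x^i)$ on $M$ and $(\phi^\sigma)$ on $N$. Consider the fibred manifold $\pi: M\times N\to M$ with adapted coordinates $(x^i,\phi^\sigma)$ and induced jet coordinates $\phi^\sigma_i,\phi^\sigma_{ij}$ on the second jet prolongation. Let $g^{ij}(x)$ be the components of a (symmetric, nondegenerate) inverse metric on $M$, and let $h_{\sigma\nu}(x,\phi)$ be smooth functions, symmetric in $\sigma,\nu$ and nondegenerate, so that for each fixed $x$ they are the components of a metric $h_x$ on $N$ (which may differ from fibre to fibre). Put $B^{ij}_{\sigma\nu}=g^{ij}(x)h_{\sigma\nu}(x,\phi)$ and consider the dynamical form $E=E_\nu\,\omega^\nu\wedge\omega_0$, where $\omega^\nu={\rm d}\phi^\nu-\phi^\nu_i{\rm d}x^i$, $\omega_0={\rm d}x^1\wedge\cdots\wedge{\rm d}x^m$, and $$E_\nu=B^{ij}_{\sigma\nu}\left(\phi^\sigma_{ij}-{}^M\Gamma^k_{ij}\phi^\sigma_k+{}^N\Gamma^\sigma_{\alpha\lambda}\phi^\alpha_i\phi^\lambda_j\right).$$ Suppose that (1) for each fixed $x$, the connection ${}^N\nabla$ is compatible with the metric $h_x$, i.e. $\dfrac{\partial h_{\mu\nu}}{\partial\phi^\lambda}={}^N\Gamma^\sigma_{\mu\lambda}h_{\sigma\nu}+{}^N\Gamma^\sigma_{\nu\lambda}h_{\sigma\mu}$;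 and (2) the dependence of $h$ on the base coordinates is governed by ${}^M\nabla$ and $g$ via $$h_{\mu\nu}\left(g^{ij}\,{}^M\Gamma^l_{ij}+\frac{\partial g^{lp}}{\partial x^p}\right)=-\frac{\partial h_{\mu\nu}}{\partial x^p}\,g^{lp}\quad\text{for all } l,\mu,\nu;$$ equivalently, writing ${}^M\Gamma^l_{ij}={}^M\bar\Gamma^l_{ij}+S^l_{ij}$ with ${}^M\bar\Gamma$ the Levi-Civita connection of $g$ and $S$ a tensor, $g^{ij}S^l_{ij}=-\frac{1}{n}h^{\mu\nu}\frac{\partial h_{\mu\nu}}{\partial x^p}g^{lp}$. Then the dynamical form $E$ is variational, i.e. $B=g\otimes h$ solves the weak inverse problem of the calculus of variations for the geodesic mapping equations $\phi^\sigma_{ij}-{}^M\Gamma^k_{ij}\phi^\sigma_k+{}^N\Gamma^\sigma_{\alpha\lambda}\phi^\alpha_i\phi^\lambda_j=0$. In particular ${}^N\nabla$ must be metric (fibrewise), whereas ${}^M\nabla$ need not be the Levi-Civita connection of $g$.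
   Context: A map $\phi:M\to N$ (immersion, $\dim M\le\dim N$) between manifolds with affine connections is called geodesic if it maps every geodesic curve of $(M,{}^M\nabla)$ to a geodesic curve of $(N,{}^N\nabla)$ (with the same parameter); a sufficient condition is the system $\phi^\sigma_{ij}-{}^M\Gamma^k_{ij}\phi^\sigma_k+{}^N\Gamma^\sigma_{\alpha\lambda}\phi^\alpha_i\phi^\lambda_j=0$. A dynamical form $E=E_\nu\,\omega^\nu\wedge\omega_0$ on the second jet prolongation of $M\times N\to M$ is called variational if it is (locally) the Euler–Lagrange form of some Lagrangian, i.e. $E_\nu=\frac{\partial L}{\partial\phi^\nu}-{\rm d}_k\frac{\partial L}{\partial\phi^\nu_k}+\dots$ for some Lagrangian $L$; the weak inverse problem asks for a multiplier $B^{ij}_{\sigma\nu}(x,\phi)$ (independent of derivatives) making the multiplied equations variational. Here ${\rm d}_k$ denotes the total derivative. *)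

theory Defs
  imports "HOL-Analysis.Analysis"
begin

text \<open>Coordinates on M are x :: real^'m (index type 'm, dimension
CARD('m)), coordinates on N are y :: real^'n. A section of M x N -> M is a map
gamma :: real^'m => real^'n (gamma x $ s = phi^s(x)).\<close>

definition dirderiv :: "('a::real_normed_vector \<Rightarrow> real) \<Rightarrow> 'a \<Rightarrow> 'a \<Rightarrow> real" where
  "dirderiv f v z = deriv (\<lambda>t. f (z + t *\<^sub>R v)) 0"

definition pd :: "(real^'a \<Rightarrow> real) \<Rightarrow> 'a \<Rightarrow> real^'a \<Rightarrow> real" where
  "pd f i z = dirderiv f (axis i 1) z"

text \<open>C-infinity on a set U (meant for open U): differentiable, and all coordinate partial
derivatives are again C-infinity.\<close>
coinductive smooth_on :: "'a::euclidean_space set \<Rightarrow> ('a \<Rightarrow> real) \<Rightarrow> bool" for U where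
  "f differentiable_on U \<Longrightarrow> (\<forall>b\<in>Basis. smooth_on U (dirderiv f b)) \<Longrightarrow> smooth_on U f"

text \<open>First jet prolongation of a section: ((x, phi), phi^s_i) with (p $ i $ s) = phi^s_i.\<close>
definition jet1 :: "(real^'m \<Rightarrow> real^'n) \<Rightarrow> real^'m \<Rightarrow> ((real^'m) \<times> (real^'n)) \<times> ((real^'n)^'m)" where
  "jet1 \<gamma> x = ((x, \<gamma> x), \<chi> i. \<chi> s. pd (\<lambda>z. \<gamma> z $ s) i x)"

text \<open>Euler--Lagrange expressions of a (first order) Lagrangian L(x, phi, phi_i), evaluated
along a section: dL/dphi^nu - d_k dL/dphi^nu_k, where the total derivative d_k along the
prolonged section is the partial derivative in x^k of the composite.\<close>
definition EL :: "(((real^'m) \<times> (real^'n)) \<times> ((real^'n)^'m) \<Rightarrow> real) \<Rightarrow> (real^'m \<Rightarrow> real^'n)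
                   \<Rightarrow> 'n \<Rightarrow> real^'m \<Rightarrow> real" where
  "EL L \<gamma> \<nu> x =
     dirderiv L ((0, axis \<nu> 1), 0) (jet1 \<gamma> x)
     - (\<Sum>k\<in>UNIV. pd (\<lambda>z. dirderiv L ((0, 0), axis k (axis \<nu> 1)) (jet1 \<gamma> z)) k x)"

text \<open>A dynamical form, given by its components E gamma nu x (the component E_nu evaluated on the
2-jet of gamma at x), defined on the chart domain U x V, is (locally) variational if around every
point of U x V there is a Lagrangian whose Euler--Lagrange expressions coincide with E.\<close>
definition locally_variational ::
  "(real^'m) set \<Rightarrow> (real^'n) set \<Rightarrow> ((real^'m \<Rightarrow> real^'n) \<Rightarrow> 'n \<Rightarrow> real^'m \<Rightarrow> real) \<Rightarrow> bool" where
  "locally_variational U V E \<longleftrightarrow>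
    (\<forall>x0\<in>U. \<forall>y0\<in>V. \<exists>W L. open W \<and> (x0, y0) \<in> W \<and> W \<subseteq> U \<times> V \<and>
       smooth_on (W \<times> UNIV) L \<and>
       (\<forall>\<gamma> Q x. open Q \<and> x \<in> Q \<and> (\<forall>s. smooth_on Q (\<lambda>z. \<gamma> z $ s)) \<and>
                 (\<forall>z\<in>Q. (z, \<gamma> z) \<in> W) \<longrightarrow> (\<forall>\<nu>. E \<gamma> \<nu> x = EL L \<gamma> \<nu> x)))"

text \<open>The multiplied geodesic-map dynamical form
 E_nu = g^{ij} h_{s nu} (phi^s_{ij} - GM^k_{ij} phi^s_k + GN^s_{a l} phi^a_i phi^l_j),
with GM x k i j = Gamma^k_{ij}(x), GN y s a l = Gamma^s_{al}(y).\<close>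
definition geodesic_form ::
  "(real^'m \<Rightarrow> 'm \<Rightarrow> 'm \<Rightarrow> real) \<Rightarrow> (real^'m \<Rightarrow> real^'n \<Rightarrow> 'n \<Rightarrow> 'n \<Rightarrow> real)
   \<Rightarrow> (real^'m \<Rightarrow> 'm \<Rightarrow> 'm \<Rightarrow> 'm \<Rightarrow> real) \<Rightarrow> (real^'n \<Rightarrow> 'n \<Rightarrow> 'n \<Rightarrow> 'n \<Rightarrow> real)
   \<Rightarrow> (real^'m \<Rightarrow> real^'n) \<Rightarrow> 'n \<Rightarrow> real^'m \<Rightarrow> real" where
  "geodesic_form g h GM GN \<gamma> \<nu> x =
     (\<Sum>s\<in>UNIV. \<Sum>i\<in>UNIV. \<Sum>j\<in>UNIV. g x i j * h x (\<gamma> x) s \<nu> *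
        (pd (pd (\<lambda>z. \<gamma> z $ s) j) i x
         - (\<Sum>k\<in>UNIV. GM x k i j * pd (\<lambda>z. \<gamma> z $ s) k x)
         + (\<Sum>a\<in>UNIV. \<Sum>l\<in>UNIV. GN (\<gamma> x) s a l * pd (\<lambda>z. \<gamma> z $ a) i x * pd (\<lambda>z. \<gamma> z $ l) j x)))"

end

theory Submission
  imports Defs
begin

lemma vec_has_derivative:
  fixes f :: "'a::real_normed_vector \<Rightarrow> real^'n"
  assumes "\<And>s. ((\<lambda>z. f z $ s) has_derivative D s) (at x within S)"
  shows "(f has_derivative (\<lambda>w. \<chi> s. D s w)) (at x within S)"
  apply (subst has_derivative_componentwise_within)
  using assms by (auto simp: Basis_vec_def inner_axis)

lemma line_deriv:
  fixes f :: "'a::real_normed_vector \<Rightarrow> real"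
  assumes "(f has_derivative D) (at z)"
  shows "((\<lambda>t. f (z + t *\<^sub>R v)) has_real_derivative D v) (at 0)"
proof -
  have "((\<lambda>t. z + t *\<^sub>R v) has_derivative (\<lambda>t. t *\<^sub>R v)) (at 0)"
    by (auto intro!: derivative_eq_intros)
  from has_derivative_compose[OF this, of f D] assms
  have "((\<lambda>t. f (z + t *\<^sub>R v)) has_derivative (\<lambda>t. D (t *\<^sub>R v))) (at 0)" by simp
  moreover have "linear D" using assms has_derivative_linear by blast
  ultimately show ?thesis
    by (simp add: has_real_derivative_iff_has_vector_derivative has_vector_derivative_def linear_scale mult.commute)
qed

lemma dirderiv_eq:
  fixes f :: "'a::real_normed_vector \<Rightarrow> real"
  assumes "(f has_derivative D) (at z)"
  shows "dirderiv f v z = D v"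
  unfolding dirderiv_def using line_deriv[OF assms] DERIV_imp_deriv by blast

lemma line_deriv2:
  fixes f :: "'a::real_normed_vector \<Rightarrow> real"
  assumes "f differentiable at z"
  shows "((\<lambda>t. f (z + t *\<^sub>R v)) has_real_derivative dirderiv f v z) (at 0)"
  using assms line_deriv dirderiv_eq unfolding differentiable_def by metis

lemma dirderiv_cong:
  fixes f :: "'a::real_normed_vector \<Rightarrow> real"
  assumes "open Q" "z \<in> Q" "\<And>w. w \<in> Q \<Longrightarrow> f w = g w"
  shows "dirderiv f v z = dirderiv g v z"
  unfolding dirderiv_def
proof (rule deriv_cong_ev[OF _ refl])
  have "isCont (\<lambda>t. z + t *\<^sub>R v) 0" by (intro continuous_intros)
  then have "\<forall>\<^sub>F t in nhds 0. z + t *\<^sub>R v \<in> Q"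
    using assms(1,2) by (simp add: isCont_def tendsto_def eventually_nhds_conv_at)
  then show "\<forall>\<^sub>F t in nhds 0. f (z + t *\<^sub>R v) = g (z + t *\<^sub>R v)"
    by eventually_elim (use assms(3) in auto)
qed

lemma smooth_diff_at: "smooth_on U f \<Longrightarrow> open U \<Longrightarrow> x \<in> U \<Longrightarrow> f differentiable at x"
  by (erule smooth_on.cases) (simp add: differentiable_on_eq_differentiable_at)

lemma smooth_dir: "smooth_on U f \<Longrightarrow> b \<in> Basis \<Longrightarrow> smooth_on U (dirderiv f b)"
  by (erule smooth_on.cases) simp



inductive_set alg :: "('a::real_normed_vector \<Rightarrow> real) set \<Rightarrow> ('a \<Rightarrow> real) set" for B where
  base: "f \<in> B \<Longrightarrow> f \<in> alg B"
| const: "(\<lambda>z. c) \<in> alg B"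
| add: "f \<in> alg B \<Longrightarrow> g \<in> alg B \<Longrightarrow> (\<lambda>z. f z + g z) \<in> alg B"
| mult: "f \<in> alg B \<Longrightarrow> g \<in> alg B \<Longrightarrow> (\<lambda>z. f z * g z) \<in> alg B"

lemma alg_sum: "finite A \<Longrightarrow> (\<And>i. i \<in> A \<Longrightarrow> G i \<in> alg B) \<Longrightarrow> (\<lambda>z. \<Sum>i\<in>A. G i z) \<in> alg B"
proof (induction A rule: finite_induct)
  case empty
  then show ?case using alg.const[of 0] by simp
next
  case (insert x F)
  then show ?case using alg.add[of "G x" B "\<lambda>z. \<Sum>i\<in>F. G i z"] by simp
qed

lemma dirderiv_mult:
  fixes f g :: "'a::real_normed_vector \<Rightarrow> real"
  assumes "f differentiable at z" "g differentiable at z"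
  shows "dirderiv (\<lambda>z. f z * g z) v z = dirderiv f v z * g z + f z * dirderiv g v z"
proof -
  have "((\<lambda>t. f (z + t *\<^sub>R v) * g (z + t *\<^sub>R v)) has_real_derivative
      dirderiv f v z * g (z + 0 *\<^sub>R v) + dirderiv g v z * f (z + 0 *\<^sub>R v)) (at 0)"
    by (rule DERIV_mult[OF line_deriv2[OF assms(1)] line_deriv2[OF assms(2)]])
  then show ?thesis unfolding dirderiv_def by (simp add: DERIV_imp_deriv mult.commute)
qed

lemma dirderiv_add:
  fixes f g :: "'a::real_normed_vector \<Rightarrow> real"
  assumes "f differentiable at z" "g differentiable at z"
  shows "dirderiv (\<lambda>z. f z + g z) v z = dirderiv f v z + dirderiv g v z"
proof -
  have "((\<lambda>t. f (z + t *\<^sub>R v) + g (z + t *\<^sub>R v)) has_real_derivative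
      dirderiv f v z + dirderiv g v z) (at 0)"
    by (rule DERIV_add[OF line_deriv2[OF assms(1)] line_deriv2[OF assms(2)]])
  then show ?thesis unfolding dirderiv_def by (simp add: DERIV_imp_deriv)
qed

lemma dirderiv_const: "dirderiv (\<lambda>z. c) v z = 0"
  unfolding dirderiv_def by simp

lemma alg_props:
  assumes "a \<in> alg B"
    and B_diff: "\<And>b z. b \<in> B \<Longrightarrow> z \<in> S \<Longrightarrow> b differentiable at z"
    and B_der: "\<And>b v. b \<in> B \<Longrightarrow> \<exists>a\<in>alg B. \<forall>z\<in>S. dirderiv b v z = a z"
  shows "(\<forall>z\<in>S. a differentiable at z) \<and> (\<forall>v. \<exists>a'\<in>alg B. \<forall>z\<in>S. dirderiv a v z = a' z)"
  using assms(1)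
proof (induction rule: alg.induct)
  case (base f)
  then show ?case using B_diff B_der by blast
next
  case (const c)
  then show ?case using alg.const[of 0 B] by (auto simp: dirderiv_const)
next
  case (add f g)
  show ?case
  proof (intro conjI allI ballI)
    fix z assume "z \<in> S" then show "(\<lambda>z. f z + g z) differentiable at z" using add by auto
  next
    fix v
    obtain f' g' where "f' \<in> alg B" "g' \<in> alg B" "\<forall>z\<in>S. dirderiv f v z = f' z" "\<forall>z\<in>S. dirderiv g v z = g' z"
      using add by meson
    then show "\<exists>a'\<in>alg B. \<forall>z\<in>S. dirderiv (\<lambda>z. f z + g z) v z = a' z"
      using add by (intro bexI[OF _ alg.add[of f' B g']]) (auto simp: dirderiv_add)
  qed
next
  case (mult f g)
  show ?case
  proof (intro conjI allI ballI)
    fix z assume "z \<in> S" then show "(\<lambda>z. f z * g z) differentiable at z" using mult by auto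
  next
    fix v
    obtain f' g' where "f' \<in> alg B" "g' \<in> alg B" "\<forall>z\<in>S. dirderiv f v z = f' z" "\<forall>z\<in>S. dirderiv g v z = g' z"
      using mult by meson
    have "(\<lambda>z. f' z * g z + f z * g' z) \<in> alg B"
      by (intro alg.add alg.mult) fact+
    then show "\<exists>a'\<in>alg B. \<forall>z\<in>S. dirderiv (\<lambda>z. f z * g z) v z = a' z"
      using mult \<open>\<forall>z\<in>S. dirderiv f v z = f' z\<close> \<open>\<forall>z\<in>S. dirderiv g v z = g' z\<close>
      by (intro bexI[of _ "\<lambda>z. f' z * g z + f z * g' z"]) (auto simp: dirderiv_mult)
  qed
qed

lemma alg_smooth:
  fixes S :: "'a::euclidean_space set"
  assumes "open S" "a \<in> alg B"
    and B_diff: "\<And>b z. b \<in> B \<Longrightarrow> z \<in> S \<Longrightarrow> b differentiable at z"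
    and B_der: "\<And>b v. b \<in> B \<Longrightarrow> \<exists>a\<in>alg B. \<forall>z\<in>S. dirderiv b v z = a z"
  shows "smooth_on S a"
proof -
  have "\<exists>a'\<in>alg B. \<forall>z\<in>S. a z = a' z" using assms(2) by blast
  then show ?thesis
  proof (rule smooth_on.coinduct[of "\<lambda>f. \<exists>a'\<in>alg B. \<forall>z\<in>S. f z = a' z"])
    fix f assume "\<exists>a'\<in>alg B. \<forall>z\<in>S. f z = a' z"
    then obtain a where a: "a \<in> alg B" "\<forall>z\<in>S. f z = a z" by blast
    note P = alg_props[OF a(1) B_diff B_der]
    have "f differentiable_on S"
      unfolding differentiable_on_eq_differentiable_at[OF assms(1)]
    proof
      fix z assume z: "z \<in> S"
      then obtain D where "(a has_derivative D) (at z)" using P unfolding differentiable_def by blast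
      then have "(f has_derivative D) (at z)"
        by (rule has_derivative_transform_within_open[OF _ assms(1) z]) (use a(2) in auto)
      then show "f differentiable at z" unfolding differentiable_def by blast
    qed
    moreover have "\<exists>a'\<in>alg B. \<forall>z\<in>S. dirderiv f b z = a' z" for b
    proof -
      obtain a' where "a' \<in> alg B" "\<forall>z\<in>S. dirderiv a b z = a' z" using P by blast
      moreover have "\<forall>z\<in>S. dirderiv f b z = dirderiv a b z"
        using dirderiv_cong[OF assms(1)] a(2) by blast
      ultimately show ?thesis by auto
    qed
    ultimately show "\<exists>f'. f = f' \<and> f' differentiable_on S \<and>
         (\<forall>b\<in>Basis. (\<exists>a'\<in>alg B. \<forall>z\<in>S. dirderiv f' b z = a' z) \<or> smooth_on S (dirderiv f' b))"
      by blast
  qed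
qed

definition baseset :: "'a::euclidean_space set \<Rightarrow> 'b::euclidean_space itself \<Rightarrow> 'c::euclidean_space itself \<Rightarrow> ('a \<Rightarrow> real) set" where
  "baseset S B C = {f. linear f} \<union>
     {F. \<exists>(S'::'b set) f T. F = f \<circ> T \<and> open S' \<and> linear T \<and> T ` S \<subseteq> S' \<and> smooth_on S' f} \<union>
     {F. \<exists>(S'::'c set) f T. F = f \<circ> T \<and> open S' \<and> linear T \<and> T ` S \<subseteq> S' \<and> smooth_on S' f}"



lemma comp_props:
  fixes S :: "'a::euclidean_space set" and S' :: "'b::euclidean_space set"
  assumes b: "open S'" "linear T" "T ` S \<subseteq> S'" "smooth_on S' f"
  shows "\<And>z. z \<in> S \<Longrightarrow> (\<lambda>z. f (T z)) differentiable at z"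
    and "\<And>z. z \<in> S \<Longrightarrow> dirderiv (\<lambda>z. f (T z)) v z = (\<Sum>c\<in>Basis. (T v \<bullet> c) * dirderiv f c (T z))"
proof -
  have hd: "((\<lambda>z. f (T z)) has_derivative (\<lambda>w. \<Sum>c\<in>Basis. (T w \<bullet> c) * dirderiv f c (T z))) (at z)" if z: "z \<in> S" for z
  proof -
    have "T z \<in> S'" using b z by auto
    then have "f differentiable at (T z)" using smooth_diff_at b by blast
    then obtain D where D: "(f has_derivative D) (at (T z))" unfolding differentiable_def by blast
    have "((\<lambda>z. f (T z)) has_derivative (\<lambda>w. D (T w))) (at z)"
      using has_derivative_compose[OF linear_imp_has_derivative[OF b(2)] D] by (simp add: o_def)
    moreover have "D (T w) = (\<Sum>c\<in>Basis. (T w \<bullet> c) * dirderiv f c (T z))" for w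
    proof -
      have "linear D" using D has_derivative_linear by blast
      have "D (T w) = D (\<Sum>c\<in>Basis. (T w \<bullet> c) *\<^sub>R c)" by (simp add: euclidean_representation)
      also have "\<dots> = (\<Sum>c\<in>Basis. (T w \<bullet> c) * D c)"
        using \<open>linear D\<close> by (simp add: linear_sum linear_scale)
      finally show ?thesis using dirderiv_eq[OF D] by simp
    qed
    ultimately show ?thesis by simp
  qed
  show "\<And>z. z \<in> S \<Longrightarrow> (\<lambda>z. f (T z)) differentiable at z" using hd unfolding differentiable_def by blast
  show "\<And>z. z \<in> S \<Longrightarrow> dirderiv (\<lambda>z. f (T z)) v z = (\<Sum>c\<in>Basis. (T v \<bullet> c) * dirderiv f c (T z))"
    using hd dirderiv_eq by blast
qed

lemma comp_alg:
  fixes S :: "'a::euclidean_space set" and S' :: "'b::euclidean_space set"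
  assumes b: "open S'" "linear T" "T ` S \<subseteq> S'" "smooth_on S' f"
    and cl: "\<And>c. c \<in> Basis \<Longrightarrow> (\<lambda>z. dirderiv f c (T z)) \<in> A"
  shows "(\<lambda>z. \<Sum>c\<in>Basis. (T v \<bullet> c) * dirderiv f c (T z)) \<in> alg A"
proof (rule alg_sum)
  fix c :: 'b assume c: "c \<in> Basis"
  show "(\<lambda>z. (T v \<bullet> c) * dirderiv f c (T z)) \<in> alg A"
    by (intro alg.mult alg.const alg.base cl c)
qed simp

lemma baseset_props:
  fixes S :: "'a::euclidean_space set"
  assumes "b \<in> baseset S TYPE('b::euclidean_space) TYPE('c::euclidean_space)"
  shows "(\<forall>z\<in>S. b differentiable at z) \<and> (\<exists>a\<in>alg (baseset S TYPE('b) TYPE('c)). \<forall>z\<in>S. dirderiv b v z = a z)"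
proof -
  let ?B = "baseset S TYPE('b) TYPE('c)"
  consider "linear b"
    | S' f T where "b = f \<circ> T" "open (S'::'b set)" "linear T" "T ` S \<subseteq> S'" "smooth_on S' f"
    | S' f T where "b = f \<circ> T" "open (S'::'c set)" "linear T" "T ` S \<subseteq> S'" "smooth_on S' f"
    using assms unfolding baseset_def by blast
  then show ?thesis
  proof cases
    case 1
    then have hd: "(b has_derivative b) (at z)" for z
      by (simp add: linear_imp_has_derivative)
    have "\<forall>z\<in>S. b differentiable at z" using hd unfolding differentiable_def by blast
    moreover have "\<forall>z\<in>S. dirderiv b v z = (\<lambda>z. b v) z" using dirderiv_eq[OF hd] by simp
    ultimately show ?thesis using alg.const[of "b v" ?B]
      by (intro conjI bexI[of _ "\<lambda>z. b v"]) auto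
  next
    case (2 S' f T)
    have cl: "(\<lambda>z. dirderiv f c (T z)) \<in> ?B" if c: "c \<in> Basis" for c
    proof -
      have "dirderiv f c \<circ> T \<in> ?B"
        unfolding baseset_def using 2 smooth_dir[OF 2(5) c] by blast
      then show ?thesis by (simp add: o_def)
    qed
    show ?thesis using comp_props[where S=S, OF 2(2-5)] comp_alg[OF 2(2-5) cl, of v] 2(1)
      by (auto simp: o_def)
  next
    case (3 S' f T)
    have cl: "(\<lambda>z. dirderiv f c (T z)) \<in> ?B" if c: "c \<in> Basis" for c
    proof -
      have "dirderiv f c \<circ> T \<in> ?B"
        unfolding baseset_def using 3 smooth_dir[OF 3(5) c] by blast
      then show ?thesis by (simp add: o_def)
    qed
    show ?thesis using comp_props[where S=S, OF 3(2-5)] comp_alg[OF 3(2-5) cl, of v] 3(1)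
      by (auto simp: o_def)
  qed
qed

lemma baseset_smooth:
  fixes S :: "'a::euclidean_space set"
  assumes "open S" "a \<in> alg (baseset S TYPE('b::euclidean_space) TYPE('c::euclidean_space))"
  shows "smooth_on S a"
  using alg_smooth[OF assms] baseset_props by blast


lemma sum_if_eq: "(\<Sum>i\<in>(UNIV::'a::finite set). if i = k then f i else 0) = (f k :: real)"
  by (simp add: sum.delta')
lemma sum_if_eq': "(\<Sum>i\<in>(UNIV::'a::finite set). if k = i then f i else 0) = (f k :: real)"
  by (simp add: sum.delta)
lemma axis2: "(axis k (axis v 1) :: (real^'n)^'m) $ i $ s = (if i = k \<and> s = v then 1 else 0)"
  by (simp add: axis_def)
lemma delta1:
  fixes F :: "'m::finite \<Rightarrow> 'm \<Rightarrow> 'n::finite \<Rightarrow> 'n \<Rightarrow> real"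
  shows "(\<Sum>i\<in>UNIV. \<Sum>j\<in>UNIV. \<Sum>s\<in>UNIV. \<Sum>u\<in>UNIV. F i j s u * (axis k (axis v 1) :: (real^'n)^'m) $ i $ s)
     = (\<Sum>j\<in>UNIV. \<Sum>u\<in>UNIV. F k j v u)"
proof -
  have "(\<Sum>j\<in>UNIV. \<Sum>s\<in>UNIV. \<Sum>u\<in>UNIV. F i j s u * (axis k (axis v 1) :: (real^'n)^'m) $ i $ s)
     = (if i = k then (\<Sum>j\<in>UNIV. \<Sum>u\<in>UNIV. F k j v u) else 0)" for i
  proof (cases "i = k")
    case True
    have "(\<Sum>s\<in>UNIV. \<Sum>u\<in>UNIV. F i j s u * (axis k (axis v 1) :: (real^'n)^'m) $ i $ s)
       = (\<Sum>s\<in>UNIV. if s = v then (\<Sum>u\<in>UNIV. F i j s u) else 0)" for j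
      by (intro sum.cong refl) (auto simp: axis2 axis_def True)
    then show ?thesis using True by (simp add: sum_if_eq)
  qed (simp add: axis2)
  then show ?thesis by (simp add: sum_if_eq)
qed
lemma delta2:
  fixes F :: "'m::finite \<Rightarrow> 'm \<Rightarrow> 'n::finite \<Rightarrow> 'n \<Rightarrow> real"
  shows "(\<Sum>i\<in>UNIV. \<Sum>j\<in>UNIV. \<Sum>s\<in>UNIV. \<Sum>u\<in>UNIV. F i j s u * (axis k (axis v 1) :: (real^'n)^'m) $ j $ u)
     = (\<Sum>i\<in>UNIV. \<Sum>s\<in>UNIV. F i k s v)"
proof -
  have "(\<Sum>j\<in>UNIV. \<Sum>s\<in>UNIV. \<Sum>u\<in>UNIV. F i j s u * (axis k (axis v 1) :: (real^'n)^'m) $ j $ u)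
     = (\<Sum>s\<in>UNIV. \<Sum>j\<in>UNIV. \<Sum>u\<in>UNIV. F i j s u * (axis k (axis v 1) :: (real^'n)^'m) $ j $ u)" for i
    by (rule sum.swap)
  moreover have "(\<Sum>j\<in>UNIV. \<Sum>u\<in>UNIV. F i j s u * (axis k (axis v 1) :: (real^'n)^'m) $ j $ u)
     = F i k s v" for i s
  proof -
    have "(\<Sum>u\<in>UNIV. F i j s u * (axis k (axis v 1) :: (real^'n)^'m) $ j $ u)
       = (if j = k then F i j s v else 0)" for j
      by (auto simp: axis2 sum_if_eq if_distrib cong: if_cong)
    then show ?thesis by (simp add: sum_if_eq)
  qed
  ultimately show ?thesis by simp
qed


definition Lag :: "(real^'m \<Rightarrow> 'm \<Rightarrow> 'm \<Rightarrow> real) \<Rightarrow> (real^'m \<Rightarrow> real^'n \<Rightarrow> 'n \<Rightarrow> 'n \<Rightarrow> real)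
   \<Rightarrow> ((real^'m) \<times> (real^'n)) \<times> ((real^'n)^'m) \<Rightarrow> real" where
  "Lag g h q = -(1/2) * (\<Sum>i\<in>UNIV. \<Sum>j\<in>UNIV. \<Sum>s\<in>UNIV. \<Sum>u\<in>UNIV.
      g (fst (fst q)) i j * h (fst (fst q)) (snd (fst q)) s u * (snd q $ i $ s) * (snd q $ j $ u))"

lemma Lag_dy:
  fixes g :: "real^'m \<Rightarrow> 'm \<Rightarrow> 'm \<Rightarrow> real" and h :: "real^'m \<Rightarrow> real^'n \<Rightarrow> 'n \<Rightarrow> 'n \<Rightarrow> real"
  assumes hd: "\<And>s u. (\<lambda>y'. h x y' s u) differentiable at y"
  shows "dirderiv (Lag g h) ((0, axis v 1), 0) ((x,y),p) =
     -(1/2) * (\<Sum>i\<in>UNIV. \<Sum>j\<in>UNIV. \<Sum>s\<in>UNIV. \<Sum>u\<in>UNIV.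
        g x i j * pd (\<lambda>y'. h x y' s u) v y * (p $ i $ s) * (p $ j $ u))"
proof -
  have eq: "(\<lambda>t. Lag g h (((x,y),p) + t *\<^sub>R ((0, axis v 1), 0))) =
     (\<lambda>t. -(1/2) * (\<Sum>i\<in>UNIV. \<Sum>j\<in>UNIV. \<Sum>s\<in>UNIV. \<Sum>u\<in>UNIV.
        g x i j * h x (y + t *\<^sub>R axis v 1) s u * (p $ i $ s) * (p $ j $ u)))"
    by (simp add: Lag_def)
  have d: "((\<lambda>t. g x i j * h x (y + t *\<^sub>R axis v 1) s u * (p $ i $ s) * (p $ j $ u)) has_real_derivative
      g x i j * pd (\<lambda>y'. h x y' s u) v y * (p $ i $ s) * (p $ j $ u)) (at 0)" for i j s u
  proof -
    have d0: "((\<lambda>t. h x (y + t *\<^sub>R axis v 1) s u) has_real_derivative pd (\<lambda>y'. h x y' s u) v y) (at 0)"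
      using line_deriv2[OF hd] unfolding pd_def .
    show ?thesis using DERIV_cmult_right[OF DERIV_cmult_right[OF DERIV_cmult[OF d0]]] by simp
  qed
  have "((\<lambda>t. -(1/2) * (\<Sum>i\<in>UNIV. \<Sum>j\<in>UNIV. \<Sum>s\<in>UNIV. \<Sum>u\<in>UNIV.
        g x i j * h x (y + t *\<^sub>R axis v 1) s u * (p $ i $ s) * (p $ j $ u))) has_real_derivative
      -(1/2) * (\<Sum>i\<in>UNIV. \<Sum>j\<in>UNIV. \<Sum>s\<in>UNIV. \<Sum>u\<in>UNIV.
        g x i j * pd (\<lambda>y'. h x y' s u) v y * (p $ i $ s) * (p $ j $ u))) (at 0)"
    by (intro DERIV_cmult DERIV_sum d)
  then show ?thesis unfolding dirderiv_def eq by (rule DERIV_imp_deriv)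
qed

lemma Lag_dp:
  fixes g :: "real^'m \<Rightarrow> 'm \<Rightarrow> 'm \<Rightarrow> real" and h :: "real^'m \<Rightarrow> real^'n \<Rightarrow> 'n \<Rightarrow> 'n \<Rightarrow> real"
  assumes gs: "\<And>i j. g x i j = g x j i" and hs: "\<And>s u. h x y s u = h x y u s"
  shows "dirderiv (Lag g h) ((0, 0), axis k (axis v 1)) ((x,y),p) =
     -(\<Sum>j\<in>UNIV. \<Sum>u\<in>UNIV. g x j k * h x y u v * (p $ j $ u))"
proof -
  define e where "e = (axis k (axis v 1) :: (real^'n)^'m)"
  have eq: "(\<lambda>t. Lag g h (((x,y),p) + t *\<^sub>R ((0, 0), e))) =
     (\<lambda>t. -(1/2) * (\<Sum>i\<in>UNIV. \<Sum>j\<in>UNIV. \<Sum>s\<in>UNIV. \<Sum>u\<in>UNIV.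
        g x i j * h x y s u * (p $ i $ s + t * e $ i $ s) * (p $ j $ u + t * e $ j $ u)))"
    by (simp add: Lag_def)
  have d: "((\<lambda>t. g x i j * h x y s u * (p $ i $ s + t * e $ i $ s) * (p $ j $ u + t * e $ j $ u)) has_real_derivative
      g x i j * h x y s u * (e $ i $ s * p $ j $ u + p $ i $ s * e $ j $ u)) (at 0)" for i j s u
    by (auto intro!: derivative_eq_intros simp: algebra_simps)
  have "((\<lambda>t. -(1/2) * (\<Sum>i\<in>UNIV. \<Sum>j\<in>UNIV. \<Sum>s\<in>UNIV. \<Sum>u\<in>UNIV.
        g x i j * h x y s u * (p $ i $ s + t * e $ i $ s) * (p $ j $ u + t * e $ j $ u))) has_real_derivative
      -(1/2) * (\<Sum>i\<in>UNIV. \<Sum>j\<in>UNIV. \<Sum>s\<in>UNIV. \<Sum>u\<in>UNIV.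
        g x i j * h x y s u * (e $ i $ s * p $ j $ u + p $ i $ s * e $ j $ u))) (at 0)"
    by (intro DERIV_cmult DERIV_sum d)
  then have "dirderiv (Lag g h) ((0, 0), e) ((x,y),p) = -(1/2) * (\<Sum>i\<in>UNIV. \<Sum>j\<in>UNIV. \<Sum>s\<in>UNIV. \<Sum>u\<in>UNIV.
        g x i j * h x y s u * (e $ i $ s * p $ j $ u + p $ i $ s * e $ j $ u))"
    unfolding dirderiv_def eq by (rule DERIV_imp_deriv)
  also have "\<dots> = -(1/2) * ((\<Sum>i\<in>UNIV. \<Sum>j\<in>UNIV. \<Sum>s\<in>UNIV. \<Sum>u\<in>UNIV.
        (g x i j * h x y s u * p $ j $ u) * e $ i $ s) + (\<Sum>i\<in>UNIV. \<Sum>j\<in>UNIV. \<Sum>s\<in>UNIV. \<Sum>u\<in>UNIV.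
        (g x i j * h x y s u * p $ i $ s) * e $ j $ u))"
    by (simp add: algebra_simps sum.distrib)
  also have "\<dots> = -(1/2) * ((\<Sum>j\<in>UNIV. \<Sum>u\<in>UNIV. g x k j * h x y v u * p $ j $ u) +
      (\<Sum>i\<in>UNIV. \<Sum>s\<in>UNIV. g x i k * h x y s v * p $ i $ s))"
    unfolding e_def delta1 delta2 ..
  also have "\<dots> = -(\<Sum>j\<in>UNIV. \<Sum>u\<in>UNIV. g x j k * h x y u v * (p $ j $ u))"
    by (simp add: gs[of k] hs[of v])
  finally show ?thesis by (simp add: e_def)
qed



lemma h_chain:
  fixes H :: "(real^'a) \<times> (real^'b) \<Rightarrow> real" and \<gamma> :: "real^'a \<Rightarrow> real^'b"
  assumes Hd: "H differentiable at (x, \<gamma> x)"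
    and gd: "\<And>l. (\<lambda>z. \<gamma> z $ l) differentiable at x"
  shows "((\<lambda>t. H (x + t *\<^sub>R axis k 1, \<gamma> (x + t *\<^sub>R axis k 1))) has_real_derivative
     pd (\<lambda>x'. H (x', \<gamma> x)) k x + (\<Sum>l\<in>UNIV. pd (\<lambda>y'. H (x, y')) l (\<gamma> x) * pd (\<lambda>z. \<gamma> z $ l) k x)) (at 0)"
proof -
  obtain D where D: "(H has_derivative D) (at (x, \<gamma> x))" using Hd unfolding differentiable_def by blast
  have "\<forall>l. \<exists>Dl. ((\<lambda>z. \<gamma> z $ l) has_derivative Dl) (at x)" using gd unfolding differentiable_def by blast
  then obtain G where G: "\<And>l. ((\<lambda>z. \<gamma> z $ l) has_derivative G l) (at x)" by metis
  have gv: "(\<gamma> has_derivative (\<lambda>w. \<chi> l. G l w)) (at x)"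
    by (rule vec_has_derivative) (use G in auto)
  have pair: "((\<lambda>z. (z, \<gamma> z)) has_derivative (\<lambda>w. (w, \<chi> l. G l w))) (at x)"
    by (intro has_derivative_Pair has_derivative_ident gv)
  have comp: "((\<lambda>z. H (z, \<gamma> z)) has_derivative (\<lambda>w. D (w, \<chi> l. G l w))) (at x)"
    using has_derivative_compose[OF pair D] by (simp add: o_def)
  have ld: "((\<lambda>t. H (x + t *\<^sub>R axis k 1, \<gamma> (x + t *\<^sub>R axis k 1))) has_real_derivative
      D (axis k 1, \<chi> l. G l (axis k 1))) (at 0)"
    using line_deriv[OF comp, of "axis k 1"] by simp
  have lin: "linear D" using D has_derivative_linear by blast
  have vec: "(axis k 1, \<chi> l. G l (axis k 1)) = (axis k 1, 0) + (\<Sum>l\<in>UNIV. G l (axis k 1) *\<^sub>R (0, axis l 1))"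
  proof -
    have "(\<Sum>l\<in>UNIV. G l (axis k 1) *\<^sub>R (axis l 1 :: real^'b)) = (\<chi> l. G l (axis k 1))"
      using basis_expansion[of "\<chi> l. G l (axis k 1)"] by (simp add: scalar_mult_eq_scaleR)
    then show ?thesis by (simp add: prod_eq_iff fst_sum snd_sum)
  qed
  have "D (axis k 1, \<chi> l. G l (axis k 1)) = D (axis k 1, 0) + (\<Sum>l\<in>UNIV. G l (axis k 1) * D (0, axis l 1))"
  proof -
    have sc: "D (0, c *\<^sub>R a) = c * D (0, a)" for c a
      using linear_scale[OF lin, of c "(0, a)"] by simp
    show ?thesis unfolding vec using lin by (simp add: linear_add linear_sum sc)
  qed
  moreover have "D (axis k 1, 0) = pd (\<lambda>x'. H (x', \<gamma> x)) k x"
    using dirderiv_eq[OF D, of "(axis k 1, 0)"] unfolding pd_def dirderiv_def by simp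
  moreover have "D (0, axis l 1) = pd (\<lambda>y'. H (x, y')) l (\<gamma> x)" for l
    using dirderiv_eq[OF D, of "(0, axis l 1)"] unfolding pd_def dirderiv_def by simp
  moreover have "G l (axis k 1) = pd (\<lambda>z. \<gamma> z $ l) k x" for l
    using dirderiv_eq[OF G[of l], of "axis k 1"] unfolding pd_def by simp
  ultimately show ?thesis using ld by (simp add: mult.commute)
qed



lemma Lag_smooth:
  fixes g :: "real^'m \<Rightarrow> 'm \<Rightarrow> 'm \<Rightarrow> real" and h :: "real^'m \<Rightarrow> real^'n \<Rightarrow> 'n \<Rightarrow> 'n \<Rightarrow> real"
  assumes U: "open U" and V: "open V"
    and gs: "\<And>i j. smooth_on U (\<lambda>x. g x i j)"
    and hs: "\<And>s u. smooth_on (U \<times> V) (\<lambda>(x, y). h x y s u)"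
  shows "smooth_on ((U \<times> V) \<times> UNIV) (Lag g h)"
proof -
  let ?S = "(U \<times> V) \<times> (UNIV :: ((real^'n)^'m) set)"
  let ?B = "baseset ?S TYPE(real^'m) TYPE((real^'m) \<times> (real^'n))"
  have G: "(\<lambda>q. g (fst (fst q)) i j) \<in> alg ?B" for i j
  proof -
    have "linear (\<lambda>q::((real^'m) \<times> (real^'n)) \<times> ((real^'n)^'m). fst (fst q))"
      by (simp add: linear_iff)
    moreover have "(\<lambda>q. fst (fst q)) ` ?S \<subseteq> U" by auto
    ultimately have "(\<lambda>x. g x i j) \<circ> (\<lambda>q. fst (fst q)) \<in> ?B"
      unfolding baseset_def using U gs[of i j] by blast
    then show ?thesis by (intro alg.base) (simp add: o_def)
  qed
  have H: "(\<lambda>q. h (fst (fst q)) (snd (fst q)) s u) \<in> alg ?B" for s u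
  proof -
    have "linear (\<lambda>q::((real^'m) \<times> (real^'n)) \<times> ((real^'n)^'m). fst q)"
      by (simp add: linear_iff)
    moreover have "(\<lambda>q. fst q) ` ?S \<subseteq> U \<times> V" by auto
    moreover have "open (U \<times> V)" using U V by (simp add: open_Times)
    ultimately have "(\<lambda>(x, y). h x y s u) \<circ> (\<lambda>q. fst q) \<in> ?B"
      unfolding baseset_def using hs[of s u] by blast
    then show ?thesis by (intro alg.base) (simp add: o_def case_prod_beta)
  qed
  have P: "(\<lambda>q. snd q $ i $ s) \<in> alg ?B" for i s
  proof -
    have "linear (\<lambda>q::((real^'m) \<times> (real^'n)) \<times> ((real^'n)^'m). snd q $ i $ s)"
      by (simp add: linear_iff)
    then show ?thesis unfolding baseset_def by (intro alg.base) blast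
  qed
  have "Lag g h \<in> alg ?B"
    unfolding Lag_def[abs_def]
    by (intro alg.mult alg.const alg_sum G H P) simp_all
  then show ?thesis
    by (rule baseset_smooth[rotated]) (use U V in \<open>simp add: open_Times\<close>)
qed



lemma alg_identity:
  fixes gg :: "'m::finite \<Rightarrow> 'm \<Rightarrow> real" and hh :: "'n::finite \<Rightarrow> 'n \<Rightarrow> real"
    and Gm :: "'m \<Rightarrow> 'm \<Rightarrow> 'm \<Rightarrow> real" and Gn :: "'n \<Rightarrow> 'n \<Rightarrow> 'n \<Rightarrow> real"
    and P :: "'n \<Rightarrow> 'm \<Rightarrow> real" and PP :: "'n \<Rightarrow> 'm \<Rightarrow> 'm \<Rightarrow> real"
    and dg :: "'m \<Rightarrow> 'm \<Rightarrow> real" and hx :: "'n \<Rightarrow> 'n \<Rightarrow> 'm \<Rightarrow> real" and hy :: "'n \<Rightarrow> 'n \<Rightarrow> 'n \<Rightarrow> real"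
  assumes gsym: "\<And>i j. gg i j = gg j i" and hsym: "\<And>s u. hh s u = hh u s"
    and Gnsym: "\<And>s a l. Gn s a l = Gn s l a"
    and metric: "\<And>\<mu> \<nu> la. hy \<mu> \<nu> la = (\<Sum>s\<in>UNIV. Gn s \<mu> la * hh s \<nu>) + (\<Sum>s\<in>UNIV. Gn s \<nu> la * hh s \<mu>)"
    and base: "\<And>l \<mu> \<nu>. hh \<mu> \<nu> * ((\<Sum>i\<in>UNIV. \<Sum>j\<in>UNIV. gg i j * Gm l i j) + (\<Sum>p\<in>UNIV. dg l p))
          = - (\<Sum>p\<in>UNIV. hx \<mu> \<nu> p * gg l p)"
  shows "(\<Sum>s\<in>UNIV. \<Sum>i\<in>UNIV. \<Sum>j\<in>UNIV. gg i j * hh s \<nu> *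
        (PP s j i - (\<Sum>k\<in>UNIV. Gm k i j * P s k) + (\<Sum>a\<in>UNIV. \<Sum>l\<in>UNIV. Gn s a l * P a i * P l j)))
   = -(1/2) * (\<Sum>i\<in>UNIV. \<Sum>j\<in>UNIV. \<Sum>s\<in>UNIV. \<Sum>u\<in>UNIV. gg i j * hy s u \<nu> * P s i * P u j)
     - (\<Sum>k\<in>UNIV. -(\<Sum>j\<in>UNIV. \<Sum>u\<in>UNIV.
          dg j k * hh u \<nu> * P u j + gg j k * (hx u \<nu> k + (\<Sum>l\<in>UNIV. hy u \<nu> l * P l k)) * P u j
          + gg j k * hh u \<nu> * PP u j k))"
    (is "?L = ?R")
proof -
  have L: "?L = (\<Sum>s\<in>UNIV. (\<Sum>i\<in>UNIV. (\<Sum>j\<in>UNIV. gg i j * hh s \<nu> * PP s j i))) - (\<Sum>s\<in>UNIV. (\<Sum>i\<in>UNIV. (\<Sum>j\<in>UNIV. (\<Sum>k\<in>UNIV. gg i j * hh s \<nu> * Gm k i j * P s k)))) + (\<Sum>s\<in>UNIV. (\<Sum>i\<in>UNIV. (\<Sum>j\<in>UNIV. (\<Sum>a\<in>UNIV. (\<Sum>l\<in>UNIV. gg i j * hh s \<nu> * Gn s a l * P a i * P l j)))))"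
    by (simp add: sum_subtractf sum.distrib sum_distrib_left algebra_simps)
  have R: "?R = -(1/2) * (\<Sum>i\<in>UNIV. (\<Sum>j\<in>UNIV. (\<Sum>s\<in>UNIV. (\<Sum>u\<in>UNIV. gg i j * hy s u \<nu> * P s i * P u j)))) + ((\<Sum>k\<in>UNIV. (\<Sum>j\<in>UNIV. (\<Sum>u\<in>UNIV. dg j k * hh u \<nu> * P u j))) + (\<Sum>k\<in>UNIV. (\<Sum>j\<in>UNIV. (\<Sum>u\<in>UNIV. gg j k * hx u \<nu> k * P u j))) + (\<Sum>k\<in>UNIV. (\<Sum>j\<in>UNIV. (\<Sum>u\<in>UNIV. gg j k * (\<Sum>l\<in>UNIV. hy u \<nu> l * P l k) * P u j))) + (\<Sum>k\<in>UNIV. (\<Sum>j\<in>UNIV. (\<Sum>u\<in>UNIV. gg j k * hh u \<nu> * PP u j k))))"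
    by (simp add: sum_negf sum_subtractf sum.distrib algebra_simps)
  have pE1: "(\<Sum>s\<in>UNIV. (\<Sum>i\<in>UNIV. (\<Sum>j\<in>UNIV. gg i j * hh s \<nu> * PP s j i))) = (\<Sum>i\<in>UNIV. (\<Sum>j\<in>UNIV. (\<Sum>s\<in>UNIV. gg i j * hh s \<nu> * PP s j i)))"
  proof -
    have "(\<Sum>s\<in>UNIV. (\<Sum>i\<in>UNIV. (\<Sum>j\<in>UNIV. gg i j * hh s \<nu> * PP s j i))) = (\<Sum>i\<in>UNIV. (\<Sum>s\<in>UNIV. (\<Sum>j\<in>UNIV. gg i j * hh s \<nu> * PP s j i)))" by (rule sum.swap)
    also have "\<dots> = (\<Sum>i\<in>UNIV. (\<Sum>j\<in>UNIV. (\<Sum>s\<in>UNIV. gg i j * hh s \<nu> * PP s j i)))" by (rule sum.cong[OF refl], rule sum.swap)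
    finally show ?thesis .
  qed
  have e1: "(\<Sum>s\<in>UNIV. (\<Sum>i\<in>UNIV. (\<Sum>j\<in>UNIV. gg i j * hh s \<nu> * PP s j i))) = (\<Sum>k\<in>UNIV. (\<Sum>j\<in>UNIV. (\<Sum>u\<in>UNIV. gg j k * hh u \<nu> * PP u j k)))"
    unfolding pE1 by (intro sum.cong refl) (simp add: gsym mult_ac)
  have pE2: "(\<Sum>s\<in>UNIV. (\<Sum>i\<in>UNIV. (\<Sum>j\<in>UNIV. (\<Sum>k\<in>UNIV. gg i j * hh s \<nu> * Gm k i j * P s k)))) = (\<Sum>k\<in>UNIV. (\<Sum>s\<in>UNIV. (\<Sum>i\<in>UNIV. (\<Sum>j\<in>UNIV. gg i j * hh s \<nu> * Gm k i j * P s k))))"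
  proof -
    have "(\<Sum>s\<in>UNIV. (\<Sum>i\<in>UNIV. (\<Sum>j\<in>UNIV. (\<Sum>k\<in>UNIV. gg i j * hh s \<nu> * Gm k i j * P s k)))) = (\<Sum>s\<in>UNIV. (\<Sum>i\<in>UNIV. (\<Sum>k\<in>UNIV. (\<Sum>j\<in>UNIV. gg i j * hh s \<nu> * Gm k i j * P s k))))" by (rule sum.cong[OF refl], rule sum.cong[OF refl], rule sum.swap)
    also have "\<dots> = (\<Sum>s\<in>UNIV. (\<Sum>k\<in>UNIV. (\<Sum>i\<in>UNIV. (\<Sum>j\<in>UNIV. gg i j * hh s \<nu> * Gm k i j * P s k))))" by (rule sum.cong[OF refl], rule sum.swap)
    also have "\<dots> = (\<Sum>k\<in>UNIV. (\<Sum>s\<in>UNIV. (\<Sum>i\<in>UNIV. (\<Sum>j\<in>UNIV. gg i j * hh s \<nu> * Gm k i j * P s k))))" by (rule sum.swap)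
    finally show ?thesis .
  qed
  have e2a: "(\<Sum>s\<in>UNIV. (\<Sum>i\<in>UNIV. (\<Sum>j\<in>UNIV. (\<Sum>k\<in>UNIV. gg i j * hh s \<nu> * Gm k i j * P s k)))) = (\<Sum>k\<in>UNIV. \<Sum>s\<in>UNIV. P s k * hh s \<nu> * (\<Sum>i\<in>UNIV. \<Sum>j\<in>UNIV. gg i j * Gm k i j))"
    unfolding pE2 by (intro sum.cong refl) (simp add: sum_distrib_left mult_ac)
  have a12: "(\<Sum>k\<in>UNIV. (\<Sum>j\<in>UNIV. (\<Sum>u\<in>UNIV. dg j k * hh u \<nu> * P u j))) + (\<Sum>k\<in>UNIV. (\<Sum>j\<in>UNIV. (\<Sum>u\<in>UNIV. gg j k * hx u \<nu> k * P u j))) = (\<Sum>k\<in>UNIV. (\<Sum>j\<in>UNIV. (\<Sum>u\<in>UNIV. (dg j k * hh u \<nu> + gg j k * hx u \<nu> k) * P u j)))"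
    by (simp add: sum.distrib[symmetric] algebra_simps)
  have pA12: "(\<Sum>k\<in>UNIV. (\<Sum>j\<in>UNIV. (\<Sum>u\<in>UNIV. (dg j k * hh u \<nu> + gg j k * hx u \<nu> k) * P u j))) = (\<Sum>j\<in>UNIV. (\<Sum>u\<in>UNIV. (\<Sum>k\<in>UNIV. (dg j k * hh u \<nu> + gg j k * hx u \<nu> k) * P u j)))"
  proof -
    have "(\<Sum>k\<in>UNIV. (\<Sum>j\<in>UNIV. (\<Sum>u\<in>UNIV. (dg j k * hh u \<nu> + gg j k * hx u \<nu> k) * P u j))) = (\<Sum>j\<in>UNIV. (\<Sum>k\<in>UNIV. (\<Sum>u\<in>UNIV. (dg j k * hh u \<nu> + gg j k * hx u \<nu> k) * P u j)))" by (rule sum.swap)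
    also have "\<dots> = (\<Sum>j\<in>UNIV. (\<Sum>u\<in>UNIV. (\<Sum>k\<in>UNIV. (dg j k * hh u \<nu> + gg j k * hx u \<nu> k) * P u j)))" by (rule sum.cong[OF refl], rule sum.swap)
    finally show ?thesis .
  qed
  have a12b: "(\<Sum>j\<in>UNIV. (\<Sum>u\<in>UNIV. (\<Sum>k\<in>UNIV. (dg j k * hh u \<nu> + gg j k * hx u \<nu> k) * P u j))) = (\<Sum>j\<in>UNIV. \<Sum>u\<in>UNIV. P u j * (hh u \<nu> * ((\<Sum>i\<in>UNIV. \<Sum>i'\<in>UNIV. gg i i' * Gm j i i') + (\<Sum>k\<in>UNIV. dg j k)) + (\<Sum>k\<in>UNIV. hx u \<nu> k * gg j k) - hh u \<nu> * (\<Sum>i\<in>UNIV. \<Sum>i'\<in>UNIV. gg i i' * Gm j i i')))"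
    by (intro sum.cong refl) (simp add: sum_distrib_left sum_distrib_right sum.distrib algebra_simps)
  have e2: "(\<Sum>s\<in>UNIV. (\<Sum>i\<in>UNIV. (\<Sum>j\<in>UNIV. (\<Sum>k\<in>UNIV. gg i j * hh s \<nu> * Gm k i j * P s k)))) = -((\<Sum>k\<in>UNIV. (\<Sum>j\<in>UNIV. (\<Sum>u\<in>UNIV. dg j k * hh u \<nu> * P u j))) + (\<Sum>k\<in>UNIV. (\<Sum>j\<in>UNIV. (\<Sum>u\<in>UNIV. gg j k * hx u \<nu> k * P u j))))"
    unfolding e2a a12 pA12 a12b base by (simp add: sum_negf algebra_simps)
  have a3: "(\<Sum>k\<in>UNIV. (\<Sum>j\<in>UNIV. (\<Sum>u\<in>UNIV. gg j k * (\<Sum>l\<in>UNIV. hy u \<nu> l * P l k) * P u j))) = (\<Sum>k\<in>UNIV. (\<Sum>j\<in>UNIV. (\<Sum>u\<in>UNIV. (\<Sum>l\<in>UNIV. (\<Sum>r\<in>UNIV. gg j k * Gn r u l * hh r \<nu> * P l k * P u j))))) + (\<Sum>k\<in>UNIV. (\<Sum>j\<in>UNIV. (\<Sum>u\<in>UNIV. (\<Sum>l\<in>UNIV. (\<Sum>r\<in>UNIV. gg j k * Gn r \<nu> l * hh r u * P l k * P u j)))))"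
    by (simp add: metric sum_distrib_left sum_distrib_right distrib_left distrib_right sum.distrib mult_ac)
  have pE3: "(\<Sum>s\<in>UNIV. (\<Sum>i\<in>UNIV. (\<Sum>j\<in>UNIV. (\<Sum>a\<in>UNIV. (\<Sum>l\<in>UNIV. gg i j * hh s \<nu> * Gn s a l * P a i * P l j))))) = (\<Sum>i\<in>UNIV. (\<Sum>j\<in>UNIV. (\<Sum>a\<in>UNIV. (\<Sum>l\<in>UNIV. (\<Sum>s\<in>UNIV. gg i j * hh s \<nu> * Gn s a l * P a i * P l j)))))"
  proof -
    have "(\<Sum>s\<in>UNIV. (\<Sum>i\<in>UNIV. (\<Sum>j\<in>UNIV. (\<Sum>a\<in>UNIV. (\<Sum>l\<in>UNIV. gg i j * hh s \<nu> * Gn s a l * P a i * P l j))))) = (\<Sum>i\<in>UNIV. (\<Sum>s\<in>UNIV. (\<Sum>j\<in>UNIV. (\<Sum>a\<in>UNIV. (\<Sum>l\<in>UNIV. gg i j * hh s \<nu> * Gn s a l * P a i * P l j)))))" by (rule sum.swap)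
    also have "\<dots> = (\<Sum>i\<in>UNIV. (\<Sum>j\<in>UNIV. (\<Sum>s\<in>UNIV. (\<Sum>a\<in>UNIV. (\<Sum>l\<in>UNIV. gg i j * hh s \<nu> * Gn s a l * P a i * P l j)))))" by (rule sum.cong[OF refl], rule sum.swap)
    also have "\<dots> = (\<Sum>i\<in>UNIV. (\<Sum>j\<in>UNIV. (\<Sum>a\<in>UNIV. (\<Sum>s\<in>UNIV. (\<Sum>l\<in>UNIV. gg i j * hh s \<nu> * Gn s a l * P a i * P l j)))))" by (rule sum.cong[OF refl], rule sum.cong[OF refl], rule sum.swap)
    also have "\<dots> = (\<Sum>i\<in>UNIV. (\<Sum>j\<in>UNIV. (\<Sum>a\<in>UNIV. (\<Sum>l\<in>UNIV. (\<Sum>s\<in>UNIV. gg i j * hh s \<nu> * Gn s a l * P a i * P l j)))))" by (rule sum.cong[OF refl], rule sum.cong[OF refl], rule sum.cong[OF refl], rule sum.swap)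
    finally show ?thesis .
  qed
  have pA3a: "(\<Sum>k\<in>UNIV. (\<Sum>j\<in>UNIV. (\<Sum>u\<in>UNIV. (\<Sum>l\<in>UNIV. (\<Sum>r\<in>UNIV. gg j k * Gn r u l * hh r \<nu> * P l k * P u j))))) = (\<Sum>j\<in>UNIV. (\<Sum>k\<in>UNIV. (\<Sum>u\<in>UNIV. (\<Sum>l\<in>UNIV. (\<Sum>r\<in>UNIV. gg j k * Gn r u l * hh r \<nu> * P l k * P u j)))))"
  proof -
    show ?thesis by (rule sum.swap)
  qed
  have e3: "(\<Sum>s\<in>UNIV. (\<Sum>i\<in>UNIV. (\<Sum>j\<in>UNIV. (\<Sum>a\<in>UNIV. (\<Sum>l\<in>UNIV. gg i j * hh s \<nu> * Gn s a l * P a i * P l j))))) = (\<Sum>k\<in>UNIV. (\<Sum>j\<in>UNIV. (\<Sum>u\<in>UNIV. (\<Sum>l\<in>UNIV. (\<Sum>r\<in>UNIV. gg j k * Gn r u l * hh r \<nu> * P l k * P u j)))))"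
    unfolding pE3 pA3a by (intro sum.cong refl) (simp add: mult_ac)
  have t1: "(\<Sum>i\<in>UNIV. (\<Sum>j\<in>UNIV. (\<Sum>s\<in>UNIV. (\<Sum>u\<in>UNIV. gg i j * hy s u \<nu> * P s i * P u j)))) = (\<Sum>i\<in>UNIV. (\<Sum>j\<in>UNIV. (\<Sum>s\<in>UNIV. (\<Sum>u\<in>UNIV. (\<Sum>r\<in>UNIV. gg i j * Gn r s \<nu> * hh r u * P s i * P u j))))) + (\<Sum>i\<in>UNIV. (\<Sum>j\<in>UNIV. (\<Sum>s\<in>UNIV. (\<Sum>u\<in>UNIV. (\<Sum>r\<in>UNIV. gg i j * Gn r u \<nu> * hh r s * P s i * P u j)))))"
    by (simp add: metric sum_distrib_left sum_distrib_right distrib_left distrib_right sum.distrib mult_ac)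
  have pT1b: "(\<Sum>i\<in>UNIV. (\<Sum>j\<in>UNIV. (\<Sum>s\<in>UNIV. (\<Sum>u\<in>UNIV. (\<Sum>r\<in>UNIV. gg i j * Gn r u \<nu> * hh r s * P s i * P u j))))) = (\<Sum>j\<in>UNIV. (\<Sum>i\<in>UNIV. (\<Sum>u\<in>UNIV. (\<Sum>s\<in>UNIV. (\<Sum>r\<in>UNIV. gg i j * Gn r u \<nu> * hh r s * P s i * P u j)))))"
  proof -
    have "(\<Sum>i\<in>UNIV. (\<Sum>j\<in>UNIV. (\<Sum>s\<in>UNIV. (\<Sum>u\<in>UNIV. (\<Sum>r\<in>UNIV. gg i j * Gn r u \<nu> * hh r s * P s i * P u j))))) = (\<Sum>j\<in>UNIV. (\<Sum>i\<in>UNIV. (\<Sum>s\<in>UNIV. (\<Sum>u\<in>UNIV. (\<Sum>r\<in>UNIV. gg i j * Gn r u \<nu> * hh r s * P s i * P u j)))))" by (rule sum.swap)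
    also have "\<dots> = (\<Sum>j\<in>UNIV. (\<Sum>i\<in>UNIV. (\<Sum>u\<in>UNIV. (\<Sum>s\<in>UNIV. (\<Sum>r\<in>UNIV. gg i j * Gn r u \<nu> * hh r s * P s i * P u j)))))" by (rule sum.cong[OF refl], rule sum.cong[OF refl], rule sum.swap)
    finally show ?thesis .
  qed
  have t1b: "(\<Sum>i\<in>UNIV. (\<Sum>j\<in>UNIV. (\<Sum>s\<in>UNIV. (\<Sum>u\<in>UNIV. (\<Sum>r\<in>UNIV. gg i j * Gn r u \<nu> * hh r s * P s i * P u j))))) = (\<Sum>i\<in>UNIV. (\<Sum>j\<in>UNIV. (\<Sum>s\<in>UNIV. (\<Sum>u\<in>UNIV. (\<Sum>r\<in>UNIV. gg i j * Gn r s \<nu> * hh r u * P s i * P u j)))))"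
    unfolding pT1b by (intro sum.cong refl) (simp add: gsym mult_ac)
  have pA3b: "(\<Sum>k\<in>UNIV. (\<Sum>j\<in>UNIV. (\<Sum>u\<in>UNIV. (\<Sum>l\<in>UNIV. (\<Sum>r\<in>UNIV. gg j k * Gn r \<nu> l * hh r u * P l k * P u j))))) = (\<Sum>k\<in>UNIV. (\<Sum>j\<in>UNIV. (\<Sum>l\<in>UNIV. (\<Sum>u\<in>UNIV. (\<Sum>r\<in>UNIV. gg j k * Gn r \<nu> l * hh r u * P l k * P u j)))))"
  proof -
    show ?thesis by (rule sum.cong[OF refl], rule sum.cong[OF refl], rule sum.swap)
  qed
  have a3b: "(\<Sum>k\<in>UNIV. (\<Sum>j\<in>UNIV. (\<Sum>u\<in>UNIV. (\<Sum>l\<in>UNIV. (\<Sum>r\<in>UNIV. gg j k * Gn r \<nu> l * hh r u * P l k * P u j))))) = (\<Sum>i\<in>UNIV. (\<Sum>j\<in>UNIV. (\<Sum>s\<in>UNIV. (\<Sum>u\<in>UNIV. (\<Sum>r\<in>UNIV. gg i j * Gn r s \<nu> * hh r u * P s i * P u j)))))"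
    unfolding pA3b by (intro sum.cong refl) (simp add: gsym Gnsym mult_ac)
  show ?thesis using L R e1 e2 a3 e3 t1 t1b a3b by linarith
qed



lemma pd_cong:
  assumes "open Q" "x \<in> Q" "\<And>z. z \<in> Q \<Longrightarrow> f z = f' z"
  shows "pd f k x = pd f' k x"
  unfolding pd_def using dirderiv_cong[OF assms] .

theorem mainTheorem1:
  fixes U :: "(real^'m) set" and V :: "(real^'n) set"
    and GM :: "real^'m \<Rightarrow> 'm \<Rightarrow> 'm \<Rightarrow> 'm \<Rightarrow> real"
    and GN :: "real^'n \<Rightarrow> 'n \<Rightarrow> 'n \<Rightarrow> 'n \<Rightarrow> real"
    and g :: "real^'m \<Rightarrow> 'm \<Rightarrow> 'm \<Rightarrow> real"
    and h :: "real^'m \<Rightarrow> real^'n \<Rightarrow> 'n \<Rightarrow> 'n \<Rightarrow> real"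
  assumes U: "open U" and V: "open V"
    and GM_smooth: "\<And>k i j. smooth_on U (\<lambda>x. GM x k i j)"
    and GM_sym: "\<And>x k i j. x \<in> U \<Longrightarrow> GM x k i j = GM x k j i"
    and GN_smooth: "\<And>s a l. smooth_on V (\<lambda>y. GN y s a l)"
    and GN_sym: "\<And>y s a l. y \<in> V \<Longrightarrow> GN y s a l = GN y s l a"
    and g_smooth: "\<And>i j. smooth_on U (\<lambda>x. g x i j)"
    and g_sym: "\<And>x i j. x \<in> U \<Longrightarrow> g x i j = g x j i"
    and g_nondeg: "\<And>x. x \<in> U \<Longrightarrow> det (\<chi> i j. g x i j) \<noteq> 0"
    and h_smooth: "\<And>s v. smooth_on (U \<times> V) (\<lambda>(x, y). h x y s v)"
    and h_sym: "\<And>x y s v. x \<in> U \<Longrightarrow> y \<in> V \<Longrightarrow> h x y s v = h x y v s"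
    and h_nondeg: "\<And>x y. x \<in> U \<Longrightarrow> y \<in> V \<Longrightarrow> det (\<chi> s v. h x y s v) \<noteq> 0"
    and metric_N: "\<And>x y \<mu> \<nu> la. x \<in> U \<Longrightarrow> y \<in> V \<Longrightarrow>
        pd (\<lambda>y'. h x y' \<mu> \<nu>) la y
          = (\<Sum>s\<in>UNIV. GN y s \<mu> la * h x y s \<nu>) + (\<Sum>s\<in>UNIV. GN y s \<nu> la * h x y s \<mu>)"
    and base_cond: "\<And>x y l \<mu> \<nu>. x \<in> U \<Longrightarrow> y \<in> V \<Longrightarrow>
        h x y \<mu> \<nu> * ((\<Sum>i\<in>UNIV. \<Sum>j\<in>UNIV. g x i j * GM x l i j) + (\<Sum>p\<in>UNIV. pd (\<lambda>x'. g x' l p) p x))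
          = - (\<Sum>p\<in>UNIV. pd (\<lambda>x'. h x' y \<mu> \<nu>) p x * g x l p)"
  shows "locally_variational U V (geodesic_form g h GM GN)"
  unfolding locally_variational_def
proof (intro ballI)
  fix x0 y0 assume x0: "x0 \<in> U" and y0: "y0 \<in> V"
  have UV: "open (U \<times> V)" using U V by (simp add: open_Times)
  have Hdiff: "(\<lambda>q. h (fst q) (snd q) s u) differentiable at (x, y)" if "x \<in> U" "y \<in> V" for x y s u
  proof -
    have eq: "(\<lambda>(x, y). h x y s u) = (\<lambda>q. h (fst q) (snd q) s u)" by auto
    show ?thesis using smooth_diff_at[OF h_smooth[of s u] UV] that unfolding eq by simp
  qed
  have hydiff: "(\<lambda>y'. h x y' s u) differentiable at y" if "x \<in> U" "y \<in> V" for x y s u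
  proof -
    have "((\<lambda>y'. (x, y')) has_derivative (\<lambda>w. (0, w))) (at y)"
      by (intro has_derivative_Pair has_derivative_const has_derivative_ident)
    then have "(\<lambda>y'. (x, y')) differentiable at y" unfolding differentiable_def by blast
    from differentiable_chain_at[OF this, of "\<lambda>q. h (fst q) (snd q) s u"] Hdiff[OF that, of s u]
    show ?thesis by (simp add: o_def)
  qed
  show "\<exists>W L. open W \<and> (x0, y0) \<in> W \<and> W \<subseteq> U \<times> V \<and> smooth_on (W \<times> UNIV) L \<and>
       (\<forall>\<gamma> Q x. open Q \<and> x \<in> Q \<and> (\<forall>s. smooth_on Q (\<lambda>z. \<gamma> z $ s)) \<and> (\<forall>z\<in>Q. (z, \<gamma> z) \<in> W) \<longrightarrow>
          (\<forall>\<nu>. geodesic_form g h GM GN \<gamma> \<nu> x = EL L \<gamma> \<nu> x))"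
  proof (intro exI conjI allI impI)
    show "open (U \<times> V)" by (rule UV)
    show "(x0, y0) \<in> U \<times> V" using x0 y0 by simp
    show "U \<times> V \<subseteq> U \<times> V" by simp
    show "smooth_on ((U \<times> V) \<times> UNIV) (Lag g h)" by (rule Lag_smooth[OF U V g_smooth h_smooth])
  next
    fix \<gamma> :: "real^'m \<Rightarrow> real^'n" and Q x \<nu>
    assume "open Q \<and> x \<in> Q \<and> (\<forall>s. smooth_on Q (\<lambda>z. \<gamma> z $ s)) \<and> (\<forall>z\<in>Q. (z, \<gamma> z) \<in> U \<times> V)"
    then have Q: "open Q" and xQ: "x \<in> Q" and gs: "\<And>s. smooth_on Q (\<lambda>z. \<gamma> z $ s)"
      and gr: "\<And>z. z \<in> Q \<Longrightarrow> z \<in> U \<and> \<gamma> z \<in> V" by auto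
    have xU: "x \<in> U" and yV: "\<gamma> x \<in> V" using gr[OF xQ] by auto
    have gd: "(\<lambda>z. \<gamma> z $ l) differentiable at x" for l using smooth_diff_at[OF gs Q xQ] .
    have pdeq: "pd (\<lambda>z. \<gamma> z $ u) j = dirderiv (\<lambda>z. \<gamma> z $ u) (axis j 1)" for u j
      by (rule ext) (simp add: pd_def)
    have Pd: "pd (\<lambda>z. \<gamma> z $ u) j differentiable at x" for u j
    proof -
      have "axis j (1::real) \<in> Basis" by simp
      then show ?thesis unfolding pdeq using smooth_diff_at[OF smooth_dir[OF gs] Q xQ] by blast
    qed
    have T1: "dirderiv (Lag g h) ((0, axis \<nu> 1), 0) (jet1 \<gamma> x) =
       -(1/2) * (\<Sum>i\<in>UNIV. \<Sum>j\<in>UNIV. \<Sum>s\<in>UNIV. \<Sum>u\<in>UNIV.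
        g x i j * pd (\<lambda>y'. h x y' s u) \<nu> (\<gamma> x) * pd (\<lambda>z. \<gamma> z $ s) i x * pd (\<lambda>z. \<gamma> z $ u) j x)"
      unfolding jet1_def using Lag_dy[where h=h and x=x and y="\<gamma> x" and g=g and v=\<nu>, OF hydiff[OF xU yV]] by simp
    have F: "dirderiv (Lag g h) ((0, 0), axis k (axis \<nu> 1)) (jet1 \<gamma> z) =
       -(\<Sum>j\<in>UNIV. \<Sum>u\<in>UNIV. g z j k * h z (\<gamma> z) u \<nu> * pd (\<lambda>w. \<gamma> w $ u) j z)" if z: "z \<in> Q" for z k
    proof -
      have "z \<in> U" "\<gamma> z \<in> V" using gr[OF z] by auto
      then show ?thesis unfolding jet1_def
        using Lag_dp[of g z h "\<gamma> z" k \<nu> "\<chi> i s. pd (\<lambda>w. \<gamma> w $ s) i z"] g_sym h_sym by simp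
    qed
    have DK: "pd (\<lambda>z. dirderiv (Lag g h) ((0, 0), axis k (axis \<nu> 1)) (jet1 \<gamma> z)) k x =
       -(\<Sum>j\<in>UNIV. \<Sum>u\<in>UNIV.
          pd (\<lambda>x'. g x' j k) k x * h x (\<gamma> x) u \<nu> * pd (\<lambda>z. \<gamma> z $ u) j x
          + g x j k * (pd (\<lambda>x'. h x' (\<gamma> x) u \<nu>) k x
              + (\<Sum>l\<in>UNIV. pd (\<lambda>y'. h x y' u \<nu>) l (\<gamma> x) * pd (\<lambda>z. \<gamma> z $ l) k x)) * pd (\<lambda>z. \<gamma> z $ u) j x
          + g x j k * h x (\<gamma> x) u \<nu> * pd (pd (\<lambda>z. \<gamma> z $ u) j) k x)" for k
    proof -
      have "pd (\<lambda>z. dirderiv (Lag g h) ((0, 0), axis k (axis \<nu> 1)) (jet1 \<gamma> z)) k x =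
         pd (\<lambda>z. -(\<Sum>j\<in>UNIV. \<Sum>u\<in>UNIV. g z j k * h z (\<gamma> z) u \<nu> * pd (\<lambda>w. \<gamma> w $ u) j z)) k x"
        by (rule pd_cong[OF Q xQ F])
      also have "\<dots> = -(\<Sum>j\<in>UNIV. \<Sum>u\<in>UNIV.
          pd (\<lambda>x'. g x' j k) k x * h x (\<gamma> x) u \<nu> * pd (\<lambda>z. \<gamma> z $ u) j x
          + g x j k * (pd (\<lambda>x'. h x' (\<gamma> x) u \<nu>) k x
              + (\<Sum>l\<in>UNIV. pd (\<lambda>y'. h x y' u \<nu>) l (\<gamma> x) * pd (\<lambda>z. \<gamma> z $ l) k x)) * pd (\<lambda>z. \<gamma> z $ u) j x
          + g x j k * h x (\<gamma> x) u \<nu> * pd (pd (\<lambda>z. \<gamma> z $ u) j) k x)"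
      proof -
        have d1: "((\<lambda>t. g (x + t *\<^sub>R axis k 1) j k) has_real_derivative pd (\<lambda>x'. g x' j k) k x) (at 0)" for j
          unfolding pd_def by (rule line_deriv2[OF smooth_diff_at[OF g_smooth U xU]])
        have d2: "((\<lambda>t. h (x + t *\<^sub>R axis k 1) (\<gamma> (x + t *\<^sub>R axis k 1)) u \<nu>) has_real_derivative
            pd (\<lambda>x'. h x' (\<gamma> x) u \<nu>) k x
              + (\<Sum>l\<in>UNIV. pd (\<lambda>y'. h x y' u \<nu>) l (\<gamma> x) * pd (\<lambda>z. \<gamma> z $ l) k x)) (at 0)" for u
          using h_chain[OF Hdiff[OF xU yV, of u \<nu>] gd, of k] by simp
        have d3: "((\<lambda>t. pd (\<lambda>w. \<gamma> w $ u) j (x + t *\<^sub>R axis k 1)) has_real_derivative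
            pd (pd (\<lambda>z. \<gamma> z $ u) j) k x) (at 0)" for u j
          unfolding pd_def[of "pd (\<lambda>z. \<gamma> z $ u) j"] by (rule line_deriv2[OF Pd])
        have "((\<lambda>t. -(\<Sum>j\<in>UNIV. \<Sum>u\<in>UNIV. g (x + t *\<^sub>R axis k 1) j k * h (x + t *\<^sub>R axis k 1) (\<gamma> (x + t *\<^sub>R axis k 1)) u \<nu>
              * pd (\<lambda>w. \<gamma> w $ u) j (x + t *\<^sub>R axis k 1))) has_real_derivative
           -(\<Sum>j\<in>UNIV. \<Sum>u\<in>UNIV.
          pd (\<lambda>x'. g x' j k) k x * h x (\<gamma> x) u \<nu> * pd (\<lambda>z. \<gamma> z $ u) j x
          + g x j k * (pd (\<lambda>x'. h x' (\<gamma> x) u \<nu>) k x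
              + (\<Sum>l\<in>UNIV. pd (\<lambda>y'. h x y' u \<nu>) l (\<gamma> x) * pd (\<lambda>z. \<gamma> z $ l) k x)) * pd (\<lambda>z. \<gamma> z $ u) j x
          + g x j k * h x (\<gamma> x) u \<nu> * pd (pd (\<lambda>z. \<gamma> z $ u) j) k x)) (at 0)"
          by (intro DERIV_minus DERIV_sum, rule DERIV_cong[OF DERIV_mult[OF DERIV_mult[OF d1 d2] d3]])
            (simp add: algebra_simps)
        then show ?thesis unfolding pd_def[of "\<lambda>z. -(\<Sum>j\<in>UNIV. \<Sum>u\<in>UNIV. g z j k * h z (\<gamma> z) u \<nu> * pd (\<lambda>w. \<gamma> w $ u) j z)"] dirderiv_def
          by (rule DERIV_imp_deriv)
      qed
      finally show ?thesis .
    qed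
    show "geodesic_form g h GM GN \<gamma> \<nu> x = EL (Lag g h) \<gamma> \<nu> x"
      unfolding geodesic_form_def EL_def T1 DK
      by (rule alg_identity[where gg = "g x" and hh = "h x (\<gamma> x)" and Gm = "GM x" and Gn = "GN (\<gamma> x)"
          and dg = "\<lambda>j k. pd (\<lambda>x'. g x' j k) k x" and hx = "\<lambda>u v k. pd (\<lambda>x'. h x' (\<gamma> x) u v) k x"
          and hy = "\<lambda>u v l. pd (\<lambda>y'. h x y' u v) l (\<gamma> x)"])
        (use g_sym[OF xU] h_sym[OF xU yV] GN_sym[OF yV] metric_N[OF xU yV] base_cond[OF xU yV] in auto)
  qed
qed

end
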